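(* Let $F\in(k[\bar v,\bar w])^e$ satisfy $F(\bar v,\bar 0)=\bar v$ and $F(\bar 0,\bar w)=\bar w$, and let $\mathbb D=(D_{\mathbf i})$ and $\mathbb D'=(D'_{\mathbf i})$ be two $F$-derivations on the same $k$-algebra $R$. If for every $l\in\{1,\dots,e\}$ and every integer $0\le i<m$ we have $D_{p^i\varepsilon_l}=D'_{p^i\varepsilon_l}$, where $\varepsilon_l$ is the $l$-th unit vector of $\mathbb N^e$, then $\mathbb D=\mathbb D'$.
   Context: $k$ is a field of characteristic $p>0$; rings are commutative with $1$; $e\in\mathbb N_{>0}$, $m\in\mathbb N_{>0}\cup\{\infty\}$. For a $k$-algebra $R$, $R[\bar v]:=R[X_1,\dots,X_e]/(X_1^{p^m},\dots,X_e^{p^m})$ ($R[[\bar X]]$ if $m=\infty$), $v_i$ the image of $X_i$; similarly $R[\bar v,\bar w]$ with a second $e$-tuple $\bar w$ of $m$-truncated variables. $[p^m]=\{0,\dots,p^m-1\}$ ($\mathbb N$ if $m=\infty$), $\bar v^{\mathbf i}=v_1^{i_1}\cdots v_e^{i_e}$. An $m$-truncated $e$-dimensional HS-derivation on $R$ over $k$ is a family $(D_{\mathbf i}:R\to R)_{\mathbf i\in[p^m]^e}$ such that $r\mapsto\sum D_{\mathbf i}(r)\bar v^{\mathbf i}$ is a $k$-algebra homomorphism $R\to R[\bar v]$ with $D_{\mathbf 0}=\mathrm{id}$. For $F=(F_1,\dots,F_e)\in(k[\bar v,\bar w])^e$, it is an $F$-derivation if for all $r\in R$: $\sum_{\mathbf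 i,\mathbf j}D_{\mathbf j}(D_{\mathbf i}(r))\bar v^{\mathbf i}\bar w^{\mathbf j}=\sum_{\mathbf i}D_{\mathbf i}(r)F(\bar v,\bar w)^{\mathbf i}$, where $F^{\mathbf i}=F_1^{i_1}\cdots F_e^{i_e}$. *)

theory Defs
  imports Main "HOL-Library.Extended_Nat" "HOL-Library.Groups_Big_Fun"
begin

(* A (truncated) power series over 'a in variables indexed by 'i is
   represented by its coefficient function ('i => nat) => 'a.
   For the ring R[v] we use 'i = 'e; for k[v,w] and R[v,w] we use
   'i = 'e + 'e, the Inl-variables being v_1..v_e and the Inr-variables
   being w_1..w_e. *)

definition idx :: "nat \<Rightarrow> enat \<Rightarrow> ('i \<Rightarrow> nat) set" where
  "idx p m = {a. \<forall>j. m = \<infinity> \<or> a j < p ^ the_enat m}"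

definition trunc :: "nat \<Rightarrow> enat \<Rightarrow> (('i \<Rightarrow> nat) \<Rightarrow> 'a::zero) \<Rightarrow> ('i \<Rightarrow> nat) \<Rightarrow> 'a" where
  "trunc p m f = (\<lambda>c. if c \<in> idx p m then f c else 0)"

(* product in the truncated ring (I finite, so the convolution sum is finite) *)
definition tmul :: "nat \<Rightarrow> enat \<Rightarrow> (('i::finite \<Rightarrow> nat) \<Rightarrow> 'a::comm_ring_1)
    \<Rightarrow> (('i \<Rightarrow> nat) \<Rightarrow> 'a) \<Rightarrow> ('i \<Rightarrow> nat) \<Rightarrow> 'a" where
  "tmul p m f g = trunc p m (\<lambda>c. \<Sum>a\<in>{a. a \<le> c}. f a * g (c - a))"

definition tone :: "('i \<Rightarrow> nat) \<Rightarrow> 'a::comm_ring_1" where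
  "tone = (\<lambda>c. if c = (\<lambda>_. 0) then 1 else 0)"

definition tconst :: "'a \<Rightarrow> ('i \<Rightarrow> nat) \<Rightarrow> 'a::comm_ring_1" where
  "tconst x = (\<lambda>c. if c = (\<lambda>_. 0) then x else 0)"

definition tpow :: "nat \<Rightarrow> enat \<Rightarrow> (('i::finite \<Rightarrow> nat) \<Rightarrow> 'a::comm_ring_1) \<Rightarrow> nat
    \<Rightarrow> ('i \<Rightarrow> nat) \<Rightarrow> 'a" where
  "tpow p m f n = (tmul p m f ^^ n) tone"

definition Fpow :: "nat \<Rightarrow> enat \<Rightarrow> ('e::finite \<Rightarrow> (('e + 'e) \<Rightarrow> nat) \<Rightarrow> 'k::comm_ring_1)
    \<Rightarrow> ('e \<Rightarrow> nat) \<Rightarrow> (('e + 'e) \<Rightarrow> nat) \<Rightarrow> 'k" where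
  "Fpow p m F i = Finite_Set.fold (\<lambda>l acc. tmul p m (tpow p m (F l) (i l)) acc) tone UNIV"

definition in_trunc :: "nat \<Rightarrow> enat \<Rightarrow> (('i \<Rightarrow> nat) \<Rightarrow> 'a::zero) \<Rightarrow> bool" where
  "in_trunc p m f \<longleftrightarrow> (\<forall>c. c \<notin> idx p m \<longrightarrow> f c = 0)"

definition unitv :: "'e \<Rightarrow> 'e \<Rightarrow> nat" where
  "unitv l = (\<lambda>j. if j = l then 1 else 0)"

(* m-truncated e-dimensional HS-derivation on R over k, where the k-algebra
   structure of R is given by the ring homomorphism phi : k \<rightarrow> R:
   r \<mapsto> \<Sum> D_i(r) v^i is a k-algebra homomorphism R \<rightarrow> R[v] and D_0 = id *)
definition HS_deriv :: "nat \<Rightarrow> enat \<Rightarrow> ('k \<Rightarrow> 'r) \<Rightarrow> (('e::finite \<Rightarrow> nat) \<Rightarrow> 'r \<Rightarrow> 'r::comm_ring_1) \<Rightarrow> bool" where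
  "HS_deriv p m phi D \<longleftrightarrow>
     (let Phi = (\<lambda>r. trunc p m (\<lambda>i. D i r)) in
       (\<forall>r s. Phi (r + s) = (\<lambda>i. Phi r i + Phi s i)) \<and>
       (\<forall>r s. Phi (r * s) = tmul p m (Phi r) (Phi s)) \<and>
       (\<forall>c. Phi (phi c) = tconst (phi c))) \<and>
     D (\<lambda>_. 0) = id"

(* D is an F-derivation:  \<Sum>_{i,j} D_j(D_i r) v^i w^j = \<Sum>_i D_i(r) F(v,w)^i,
   compared coefficientwise at every monomial v^a w^b of R[v,w];
   the right-hand coefficient is the sum over i \<in> [p^m]^e of D_i(r) times the
   (v^a w^b)-coefficient of F^i (mapped into R); this has finitely many nonzero
   terms (Sum_any = sum over the finite support). *)
definition F_deriv :: "nat \<Rightarrow> enat \<Rightarrow> ('k::comm_ring_1 \<Rightarrow> 'r)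
    \<Rightarrow> ('e::finite \<Rightarrow> (('e + 'e) \<Rightarrow> nat) \<Rightarrow> 'k)
    \<Rightarrow> (('e \<Rightarrow> nat) \<Rightarrow> 'r \<Rightarrow> 'r::comm_ring_1) \<Rightarrow> bool" where
  "F_deriv p m phi F D \<longleftrightarrow> HS_deriv p m phi D \<and>
     (\<forall>r. \<forall>c \<in> idx p m.
        D (c \<circ> Inr) (D (c \<circ> Inl) r) =
        Sum_any (\<lambda>i. if i \<in> idx p m then D i r * phi (Fpow p m F i c) else 0))"

end

theory Submission imports Defs "HOL-Library.FuncSet" "HOL-Library.Function_Algebras" "HOL-Computational_Algebra.Computational_Algebra" begin

definition deg :: "('i::finite \<Rightarrow> nat) \<Rightarrow> nat" where "deg c = sum c UNIV"

lemma finite_le: "finite {a::'i::finite\<Rightarrow>nat. a \<le> c}"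
proof -
  have "{a::'i\<Rightarrow>nat. a \<le> c} = Pi UNIV (\<lambda>i. {..c i})"
    by (auto simp: le_fun_def)
  also have "\<dots> = PiE UNIV (\<lambda>i. {..c i})" by (simp add: PiE_UNIV_domain)
  finally show ?thesis by (simp add: finite_PiE)
qed

lemma idx_down: "c \<in> idx p m \<Longrightarrow> a \<le> c \<Longrightarrow> a \<in> idx p m"
  unfolding idx_def le_fun_def by (auto intro: le_less_trans)

lemma idx_diff: "c \<in> idx p m \<Longrightarrow> c - a \<in> idx p m"
  by (erule idx_down) (auto simp: le_fun_def)

lemma tmul_at: "c \<in> idx p m \<Longrightarrow> tmul p m f g c = (\<Sum>a\<in>{a. a \<le> c}. f a * g (c - a))"
  by (simp add: tmul_def trunc_def)

lemma tmul_out: "c \<notin> idx p m \<Longrightarrow> tmul p m f g c = 0"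
  by (simp add: tmul_def trunc_def)

lemma fun_diff_diff: "(a::'i\<Rightarrow>nat) \<le> c \<Longrightarrow> c - (c - a) = a"
  by (auto simp: fun_eq_iff le_fun_def)

lemma tmul_comm: "tmul p m f g = tmul p m g f"
proof
  fix c
  show "tmul p m f g c = tmul p m g f c"
  proof (cases "c \<in> idx p m")
    case True
    have "(\<Sum>a\<in>{a. a \<le> c}. f a * g (c - a)) = (\<Sum>a\<in>{a. a \<le> c}. g a * f (c - a))"
      by (rule sum.reindex_bij_witness[where i="\<lambda>a. c - a" and j="\<lambda>a. c - a"])
         (auto simp: fun_diff_diff mult.commute, auto simp: le_fun_def)
    then show ?thesis using True by (simp add: tmul_at)
  qed (simp add: tmul_out)
qed

lemma tmul_assoc:
  fixes f g h :: "('i::finite \<Rightarrow> nat) \<Rightarrow> 'a::comm_ring_1"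
  shows "tmul p m (tmul p m f g) h = tmul p m f (tmul p m g h)"
proof
  fix c
  show "tmul p m (tmul p m f g) h c = tmul p m f (tmul p m g h) c"
  proof (cases "c \<in> idx p m")
    case True
    have "tmul p m (tmul p m f g) h c = (\<Sum>a\<in>{a. a \<le> c}. (\<Sum>b\<in>{b. b \<le> a}. f b * g (a - b)) * h (c - a))"
      using True by (auto simp: tmul_at idx_down intro!: sum.cong)
    also have "\<dots> = (\<Sum>(a,b)\<in>Sigma {a. a \<le> c} (\<lambda>a. {b. b \<le> a}). f b * g (a - b) * h (c - a))"
      by (simp add: sum.Sigma finite_le sum_distrib_right)
    also have "\<dots> = (\<Sum>(b,d)\<in>Sigma {b. b \<le> c} (\<lambda>b. {d. d \<le> c - b}). f b * (g d * h (c - b - d)))"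
    proof (rule sum.reindex_bij_witness[where i="\<lambda>(b::'i\<Rightarrow>nat,d). (b + d, b)" and j="\<lambda>(a::'i\<Rightarrow>nat,b). (b, a - b)"])
      fix x assume "x \<in> Sigma {a. a \<le> c} (\<lambda>a. {b. b \<le> a})"
      then obtain a b where x: "x = (a,b)" "b \<le> a" "a \<le> c" by auto
      have e1: "b + (a - b) = a" using x by (auto simp: le_fun_def fun_eq_iff)
      have e2: "c - b - (a - b) = c - a" using x by (auto simp: le_fun_def fun_eq_iff)
      have e3: "b \<le> c" "a - b \<le> c - b" using x by (auto simp: le_fun_def intro: order_trans diff_le_mono)
      show "(case case x of (a, b) \<Rightarrow> (b, a - b) of (b, d) \<Rightarrow> (b + d, b)) = x"
        using x e1 by simp
      show "(case x of (a, b) \<Rightarrow> (b, a - b)) \<in> Sigma {b. b \<le> c} (\<lambda>b. {d. d \<le> c - b})"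
        using x e3 by simp
      show "(case case x of (a, b) \<Rightarrow> (b, a - b) of (b, d) \<Rightarrow> f b * (g d * h (c - b - d))) =
         (case x of (a, b) \<Rightarrow> f b * g (a - b) * h (c - a))"
        using x e2 by (simp add: mult.assoc)
    next
      fix y assume "y \<in> Sigma {b. b \<le> c} (\<lambda>b. {d. d \<le> c - b})"
      then obtain b d where y: "y = (b,d)" "b \<le> c" "d \<le> c - b" by auto
      have e1: "b + d - b = d" by (auto simp: fun_eq_iff)
      have e3: "b + d \<le> c" "b \<le> b + d" using y unfolding le_fun_def
        by (auto, metis add.commute le_diff_conv2)
      show "(case case y of (b, d) \<Rightarrow> (b + d, b) of (a, b) \<Rightarrow> (b, a - b)) = y"
        using y e1 by simp
      show "(case y of (b, d) \<Rightarrow> (b + d, b)) \<in> Sigma {a. a \<le> c} (\<lambda>a. {b. b \<le> a})"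
        using y e3 by simp
    qed
    also have "\<dots> = (\<Sum>b\<in>{b. b \<le> c}. f b * (\<Sum>d\<in>{d. d \<le> c - b}. g d * h (c - b - d)))"
      by (simp add: sum.Sigma finite_le sum_distrib_left)
    also have "\<dots> = tmul p m f (tmul p m g h) c"
      using True by (auto simp: tmul_at idx_diff intro!: sum.cong)
    finally show ?thesis .
  qed (simp add: tmul_out)
qed

lemma tmul_lcomm: "tmul p m f (tmul p m g h) = tmul p m g (tmul p m f h)"
  by (metis tmul_assoc tmul_comm)

lemma deg_diff: "(a::'i::finite\<Rightarrow>nat) \<le> c \<Longrightarrow> deg (c - a) = deg c - deg a"
  unfolding deg_def by (subst sum_subtractf_nat[symmetric]) (auto simp: le_fun_def)

lemma deg_mono: "(a::'i::finite\<Rightarrow>nat) \<le> c \<Longrightarrow> deg a \<le> deg c"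
  unfolding deg_def by (rule sum_mono) (auto simp: le_fun_def)

lemma deg_0_iff: "deg (c::'i::finite\<Rightarrow>nat) = 0 \<longleftrightarrow> c = (\<lambda>_. 0)"
  unfolding deg_def by (auto simp: fun_eq_iff)

definition ordge :: "nat \<Rightarrow> (('i::finite \<Rightarrow> nat) \<Rightarrow> 'a::zero) \<Rightarrow> bool" where
  "ordge d f \<longleftrightarrow> (\<forall>c. deg c < d \<longrightarrow> f c = 0)"

lemma ordge_0[simp]: "ordge 0 f" by (simp add: ordge_def)

lemma tmul_ordge:
  assumes "ordge d1 f" "ordge d2 g"
  shows "ordge (d1 + d2) (tmul p m f g)"
  unfolding ordge_def
proof (intro allI impI)
  fix c :: "'a \<Rightarrow> nat" assume c: "deg c < d1 + d2"
  show "tmul p m f g c = 0"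
  proof (cases "c \<in> idx p m")
    case True
    have "f a * g (c - a) = 0" if "a \<le> c" for a
    proof (cases "deg a < d1")
      case True then show ?thesis using assms(1) by (simp add: ordge_def)
    next
      case False
      then have "deg (c - a) < d2" using c deg_diff[OF that] deg_mono[OF that] by simp
      then show ?thesis using assms(2) by (simp add: ordge_def)
    qed
    then show ?thesis using True by (simp add: tmul_at)
  qed (simp add: tmul_out)
qed

lemma tmul_lead:
  assumes "ordge d1 f" "ordge d2 g" "c \<in> idx p m" "deg c = d1 + d2"
  shows "tmul p m f g c = (\<Sum>a\<in>{a. a \<le> c \<and> deg a = d1}. f a * g (c - a))"
proof -
  have "tmul p m f g c = (\<Sum>a\<in>{a. a \<le> c}. f a * g (c - a))" using assms(3) by (simp add: tmul_at)
  also have "\<dots> = (\<Sum>a\<in>{a. a \<le> c \<and> deg a = d1}. f a * g (c - a))"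
  proof (rule sum.mono_neutral_right)
    show "finite {a. a \<le> c}" by (rule finite_le)
    show "{a. a \<le> c \<and> deg a = d1} \<subseteq> {a. a \<le> c}" by auto
    show "\<forall>a\<in>{a. a \<le> c} - {a. a \<le> c \<and> deg a = d1}. f a * g (c - a) = 0"
    proof
      fix a assume a: "a \<in> {a. a \<le> c} - {a. a \<le> c \<and> deg a = d1}"
      then have le: "a \<le> c" and ne: "deg a \<noteq> d1" by auto
      show "f a * g (c - a) = 0"
      proof (cases "deg a < d1")
        case True then show ?thesis using assms(1) by (simp add: ordge_def)
      next
        case False
        then have "deg (c - a) < d2" using ne assms(4) deg_diff[OF le] deg_mono[OF le] by simp
        then show ?thesis using assms(2) by (simp add: ordge_def)
      qed
    qed
  qed
  finally show ?thesis .
qed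

lemma tpow_Suc: "tpow p m f (Suc n) = tmul p m f (tpow p m f n)"
  by (simp add: tpow_def)

lemma tpow_0: "tpow p m f 0 = tone"
  by (simp add: tpow_def)

lemma tpow_ordge: "ordge 1 f \<Longrightarrow> ordge n (tpow p m f n)"
  by (induction n) (auto simp: tpow_0 tpow_Suc dest: tmul_ordge)

lemma deg_split: "deg (c::('e::finite + 'e) \<Rightarrow> nat) = (\<Sum>l\<in>UNIV. c (Inl l) + c (Inr l))"
proof -
  have "deg c = sum c (range Inl \<union> range Inr)" unfolding deg_def
    by (metis UNIV_sum)
  also have "\<dots> = sum c (range Inl) + sum c (range Inr)"
    by (rule sum.union_disjoint) auto
  also have "\<dots> = (\<Sum>l\<in>UNIV. c (Inl l)) + (\<Sum>l\<in>UNIV. c (Inr l))"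
    by (simp add: sum.reindex)
  finally show ?thesis by (simp add: sum.distrib)
qed

lemma pascal_aux:
  "(if 1 \<le> i then (if i - 1 + j = n then of_nat (n choose (i - 1)) else 0) else 0)
   + (if 1 \<le> j then (if i + (j - 1) = n then of_nat (n choose i) else 0) else 0)
   = (if i + j = Suc n then of_nat (Suc n choose i) else (0::'a::comm_ring_1))"
proof (cases i)
  case 0 then show ?thesis by (cases j) auto
next
  case (Suc i')
  then show ?thesis by (cases j) (auto simp: binomial_Suc_Suc)
qed

lemma deg_one_point:
  fixes a :: "'i::finite \<Rightarrow> nat"
  assumes "deg a = 1" "a x = 1"
  shows "a = (\<lambda>y. if y = x then 1 else 0)"
proof -
  have "sum a UNIV = a x + sum a (UNIV - {x})"
    by (simp add: sum.remove)
  then have "sum a (UNIV - {x}) = 0" using assms by (simp add: deg_def)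
  then have "\<forall>y\<in>UNIV - {x}. a y = 0" by simp
  then show ?thesis using assms(2) by (auto simp: fun_eq_iff)
qed

lemma deg_point: "deg (\<lambda>y::'i::finite. if y = x then 1 else 0) = 1"
  unfolding deg_def by simp

lemma tpow_lead:
  fixes f :: "('e::finite + 'e \<Rightarrow> nat) \<Rightarrow> 'a::comm_ring_1"
  assumes o1: "ordge 1 f"
    and f1: "\<And>c. deg c = 1 \<Longrightarrow> f c = (if c (Inl l) + c (Inr l) = 1 then 1 else 0)"
  shows "c \<in> idx p m \<Longrightarrow> deg c = n \<Longrightarrow>
    tpow p m f n c = (if c (Inl l) + c (Inr l) = n then of_nat (n choose c (Inl l)) else 0)"
proof (induction n arbitrary: c)
  case 0
  then have "c = (\<lambda>_. 0)" by (simp add: deg_0_iff)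
  then show ?case by (simp add: tpow_0 tone_def)
next
  case (Suc n)
  define T where "T c = (if c (Inl l) + c (Inr l) = n then of_nat (n choose c (Inl l)) else (0::'a))" for c
  define u :: "'e + 'e \<Rightarrow> nat" where "u = (\<lambda>y. if y = Inl l then 1 else 0)"
  define w :: "'e + 'e \<Rightarrow> nat" where "w = (\<lambda>y. if y = Inr l then 1 else 0)"
  define A where "A = {a. a \<le> c \<and> deg a = 1}"
  have uw: "u \<noteq> w" by (auto simp: u_def w_def fun_eq_iff)
  have "tpow p m f (Suc n) c = (\<Sum>a\<in>A. f a * tpow p m f n (c - a))"
    unfolding tpow_Suc A_def using Suc.prems
    by (intro tmul_lead[OF o1 tpow_ordge[OF o1]]) auto
  also have "\<dots> = (\<Sum>a\<in>A. f a * T (c - a))"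
  proof (rule sum.cong)
    fix a assume "a \<in> A"
    then have "a \<le> c" "deg a = 1" by (auto simp: A_def)
    then have "deg (c - a) = n" using Suc.prems deg_diff[of a c] by simp
    then have "tpow p m f n (c - a) = T (c - a)"
      using Suc.IH[OF idx_diff[OF Suc.prems(1)]] by (simp only: T_def)
    then show "f a * tpow p m f n (c - a) = f a * T (c - a)" by simp
  qed simp
  also have "\<dots> = (\<Sum>a\<in>A \<inter> {u, w}. f a * T (c - a))"
  proof (rule sum.mono_neutral_right)
    show "finite A" unfolding A_def by (rule finite_subset[OF _ finite_le[of c]]) auto
    show "\<forall>a\<in>A - A \<inter> {u, w}. f a * T (c - a) = 0"
    proof
      fix a assume a: "a \<in> A - A \<inter> {u, w}"
      then have d: "deg a = 1" by (auto simp: A_def)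
      have "f a = 0"
      proof (rule ccontr)
        assume "f a \<noteq> 0"
        then have s: "a (Inl l) + a (Inr l) = 1" using f1[OF d] by (auto split: if_splits)
        then have "a (Inl l) = 1 \<or> a (Inr l) = 1" by auto
        then have "a = u \<or> a = w" using deg_one_point[OF d] unfolding u_def w_def by auto
        then show False using a by auto
      qed
      then show "f a * T (c - a) = 0" by simp
    qed
  qed auto
  also have "\<dots> = (\<Sum>a\<in>{u, w}. if a \<in> A then f a * T (c - a) else 0)"
    by (simp only: Int_commute[of A] sum.inter_restrict[of "{u, w}", OF finite.insertI[OF finite.insertI[OF finite.emptyI]]])
  also have "\<dots> = (if u \<in> A then T (c - u) else 0) + (if w \<in> A then T (c - w) else 0)"
    using uw f1[OF deg_point] by (simp add: u_def w_def)
  also have "\<dots> = (if 1 \<le> c (Inl l) then (if c (Inl l) - 1 + c (Inr l) = n then of_nat (n choose (c (Inl l) - 1)) else 0) else 0)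
     + (if 1 \<le> c (Inr l) then (if c (Inl l) + (c (Inr l) - 1) = n then of_nat (n choose c (Inl l)) else 0) else 0)"
  proof -
    have "u \<in> A \<longleftrightarrow> 1 \<le> c (Inl l)" "w \<in> A \<longleftrightarrow> 1 \<le> c (Inr l)"
      unfolding A_def u_def w_def using deg_point by (auto simp: le_fun_def)
    moreover have "(c - u) (Inl l) = c (Inl l) - 1" "(c - u) (Inr l) = c (Inr l)"
      "(c - w) (Inl l) = c (Inl l)" "(c - w) (Inr l) = c (Inr l) - 1"
      by (auto simp: u_def w_def)
    ultimately show ?thesis by (simp add: T_def)
  qed
  also have "\<dots> = (if c (Inl l) + c (Inr l) = Suc n then of_nat (Suc n choose c (Inl l)) else 0)"
    by (rule pascal_aux)
  finally show ?case .
qed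

lemma deg_split_rest:
  fixes a :: "'e::finite + 'e \<Rightarrow> nat"
  assumes "deg a = a (Inl l) + a (Inr l)" "l' \<noteq> l"
  shows "a (Inl l') = 0 \<and> a (Inr l') = 0"
proof -
  have "(\<Sum>x\<in>UNIV. a (Inl x) + a (Inr x)) = (a (Inl l) + a (Inr l)) + (\<Sum>x\<in>UNIV - {l}. a (Inl x) + a (Inr x))"
    by (simp add: sum.remove)
  then have "(\<Sum>x\<in>UNIV - {l}. a (Inl x) + a (Inr x)) = 0" using assms(1) deg_split[of a] by simp
  then show ?thesis using assms(2) by simp
qed

lemma Fp_lead:
  fixes F :: "'e::finite \<Rightarrow> ('e + 'e \<Rightarrow> nat) \<Rightarrow> 'a::comm_ring_1" and k :: "'e \<Rightarrow> nat"
  assumes o1: "\<And>l. ordge 1 (F l)"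
    and f1: "\<And>l c. deg c = 1 \<Longrightarrow> F l c = (if c (Inl l) + c (Inr l) = 1 then 1 else 0)"
    and S: "finite S"
  shows "ordge (sum k S) (Finite_Set.fold (\<lambda>l acc. tmul p m (tpow p m (F l) (k l)) acc) tone S) \<and>
    (\<forall>c \<in> idx p m. deg c = sum k S \<longrightarrow>
       Finite_Set.fold (\<lambda>l acc. tmul p m (tpow p m (F l) (k l)) acc) tone S c =
       (if (\<forall>l. c (Inl l) + c (Inr l) = (if l \<in> S then k l else 0))
        then (\<Prod>l\<in>S. of_nat (k l choose c (Inl l))) else 0))"
  using S
proof (induction S rule: finite_induct)
  case empty
  show ?case
  proof (intro conjI ballI impI)
    show "ordge (sum k {}) (Finite_Set.fold (\<lambda>l acc. tmul p m (tpow p m (F l) (k l)) acc) tone {})"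
      by simp
    fix c :: "'e + 'e \<Rightarrow> nat" assume "deg c = sum k {}"
    then have c0: "c = (\<lambda>_. 0)" by (simp add: deg_0_iff)
    show "Finite_Set.fold (\<lambda>l acc. tmul p m (tpow p m (F l) (k l)) acc) tone {} c =
       (if (\<forall>l. c (Inl l) + c (Inr l) = (if l \<in> {} then k l else 0))
        then (\<Prod>l\<in>{}. of_nat (k l choose c (Inl l))) else 0)"
      by (simp add: c0 tone_def)
  qed
next
  case (insert l S)
  define G where "G = (\<lambda>l acc. tmul p m (tpow p m (F l) (k l)) acc)"
  interpret cfc: comp_fun_commute G
    by unfold_locales (auto simp: G_def fun_eq_iff tmul_lcomm)
  define V where "V = Finite_Set.fold G tone S"
  define P where "P = tpow p m (F l) (k l)"
  have fins: "Finite_Set.fold G tone (insert l S) = tmul p m P V"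
    using cfc.fold_insert[OF insert(1,2)] by (simp add: G_def P_def V_def)
  have IH1: "ordge (sum k S) V" and
    IH2: "\<And>c. c \<in> idx p m \<Longrightarrow> deg c = sum k S \<Longrightarrow> V c =
       (if (\<forall>l. c (Inl l) + c (Inr l) = (if l \<in> S then k l else 0))
        then (\<Prod>l\<in>S. of_nat (k l choose c (Inl l))) else 0)"
    using insert(3) by (auto simp: V_def G_def)
  have oP: "ordge (k l) P" unfolding P_def by (rule tpow_ordge[OF o1])
  have P2: "\<And>c. c \<in> idx p m \<Longrightarrow> deg c = k l \<Longrightarrow>
    P c = (if c (Inl l) + c (Inr l) = k l then of_nat (k l choose c (Inl l)) else 0)"
    unfolding P_def by (rule tpow_lead[OF o1 f1])
  have sk: "sum k (insert l S) = k l + sum k S" using insert(1,2) by simp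
  show ?case unfolding G_def[symmetric] fins sk
  proof (intro conjI ballI impI)
    show "ordge (k l + sum k S) (tmul p m P V)" by (rule tmul_ordge[OF oP IH1])
    fix c :: "'e + 'e \<Rightarrow> nat" assume cI: "c \<in> idx p m" and dc: "deg c = k l + sum k S"
    define A where "A = {a. a \<le> c \<and> deg a = k l}"
    define a0 where "a0 = (\<lambda>x. if x = Inl l \<or> x = Inr l then c x else 0)"
    have finA: "finite A" unfolding A_def by (rule finite_subset[OF _ finite_le[of c]]) auto
    have a0c: "a0 \<le> c" by (auto simp: a0_def le_fun_def)
    have da0: "deg a0 = c (Inl l) + c (Inr l)"
    proof -
      have "deg a0 = (\<Sum>x\<in>UNIV. if x = l then c (Inl l) + c (Inr l) else 0)"
        unfolding deg_split by (rule sum.cong) (auto simp: a0_def)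
      then show ?thesis by simp
    qed
    have ca0: "(c - a0) (Inl l') = (if l' = l then 0 else c (Inl l'))"
       "(c - a0) (Inr l') = (if l' = l then 0 else c (Inr l'))" for l'
      by (auto simp: a0_def)
    have ca0': "c (Inl l') - a0 (Inl l') = (if l' = l then 0 else c (Inl l'))"
       "c (Inr l') - a0 (Inr l') = (if l' = l then 0 else c (Inr l'))" for l'
      by (auto simp: a0_def)
    have "tmul p m P V c = (\<Sum>a\<in>A. P a * V (c - a))"
      unfolding A_def by (rule tmul_lead[OF oP IH1 cI dc])
    also have "\<dots> = (\<Sum>a\<in>A \<inter> {a0}. P a * V (c - a))"
    proof (rule sum.mono_neutral_right[OF finA])
      show "\<forall>a\<in>A - A \<inter> {a0}. P a * V (c - a) = 0"
      proof
        fix a assume a: "a \<in> A - A \<inter> {a0}"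
        then have ac: "a \<le> c" and da: "deg a = k l" and ne: "a \<noteq> a0" by (auto simp: A_def)
        have aI: "a \<in> idx p m" by (rule idx_down[OF cI ac])
        have dca: "deg (c - a) = sum k S" using deg_diff[OF ac] dc da by simp
        show "P a * V (c - a) = 0"
        proof (rule ccontr)
          assume nz: "P a * V (c - a) \<noteq> 0"
          then have "P a \<noteq> 0" by auto
          then have s1: "a (Inl l) + a (Inr l) = k l" using P2[OF aI da] by (auto split: if_splits)
          from nz have "V (c - a) \<noteq> 0" by auto
          then have "(c - a) (Inl l) + (c - a) (Inr l) = 0"
            using IH2[OF idx_diff[OF cI] dca] insert(2) by (auto split: if_splits)
          then have e1: "a (Inl l) = c (Inl l)" "a (Inr l) = c (Inr l)" using ac
            by (auto simp: le_fun_def dest: spec[of _ "Inl l"] spec[of _ "Inr l"])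
          have "a = a0"
          proof
            fix x show "a x = a0 x"
            proof (cases x)
              case (Inl l') then show ?thesis
                using e1 deg_split_rest[of a l l'] da s1 by (cases "l' = l") (auto simp: a0_def)
            next
              case (Inr l') then show ?thesis
                using e1 deg_split_rest[of a l l'] da s1 by (cases "l' = l") (auto simp: a0_def)
            qed
          qed
          then show False using ne by simp
        qed
      qed
    qed auto
    also have "\<dots> = (if a0 \<in> A then P a0 * V (c - a0) else 0)"
    proof (cases "a0 \<in> A")
      case True
      then have "A \<inter> {a0} = {a0}" by auto
      then show ?thesis using True by (simp only: sum.insert sum.empty finite.emptyI empty_iff if_True) simp
    next
      case False
      then have "A \<inter> {a0} = {}" by auto
      then show ?thesis using False by (simp only: sum.empty if_False)
    qed
    also have "\<dots> = (if (\<forall>l'. c (Inl l') + c (Inr l') = (if l' \<in> insert l S then k l' else 0))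
        then (\<Prod>l'\<in>insert l S. of_nat (k l' choose c (Inl l'))) else 0)"
    proof (cases "a0 \<in> A")
      case True
      then have da0': "deg a0 = k l" by (simp add: A_def)
      have a0I: "a0 \<in> idx p m" by (rule idx_down[OF cI a0c])
      have dca0: "deg (c - a0) = sum k S" using deg_diff[OF a0c] dc da0' by simp
      have Pa0: "P a0 = of_nat (k l choose c (Inl l))"
        using P2[OF a0I da0'] da0 da0' by (simp add: a0_def)
      have Vc: "V (c - a0) = (if (\<forall>l'. (c - a0) (Inl l') + (c - a0) (Inr l') = (if l' \<in> S then k l' else 0))
        then (\<Prod>l'\<in>S. of_nat (k l' choose (c - a0) (Inl l'))) else 0)"
        by (rule IH2[OF idx_diff[OF cI] dca0])
      have cond: "(\<forall>l'. (c - a0) (Inl l') + (c - a0) (Inr l') = (if l' \<in> S then k l' else 0)) \<longleftrightarrow>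
          (\<forall>l'. l' \<noteq> l \<longrightarrow> c (Inl l') + c (Inr l') = (if l' \<in> S then k l' else 0))"
        using insert(2) by (auto simp: ca0')
      have prodeq: "(\<Prod>l'\<in>S. of_nat (k l' choose (c - a0) (Inl l'))) = (\<Prod>l'\<in>S. (of_nat (k l' choose c (Inl l')) :: 'a))"
        using insert(2) by (intro prod.cong) (auto simp: ca0')
      have cond2: "(\<forall>l'. c (Inl l') + c (Inr l') = (if l' \<in> insert l S then k l' else 0)) \<longleftrightarrow>
          c (Inl l) + c (Inr l) = k l \<and> (\<forall>l'. l' \<noteq> l \<longrightarrow> c (Inl l') + c (Inr l') = (if l' \<in> S then k l' else 0))"
        by auto
      show ?thesis using True
        unfolding Pa0 Vc cond prodeq cond2 prod.insert[OF insert(1,2)]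
        using da0 da0' by auto
    next
      case False
      have "\<not> (\<forall>l'. c (Inl l') + c (Inr l') = (if l' \<in> insert l S then k l' else 0))"
      proof
        assume "\<forall>l'. c (Inl l') + c (Inr l') = (if l' \<in> insert l S then k l' else 0)"
        then have "deg a0 = k l" using da0 by (metis insertI1)
        then show False using False a0c by (simp add: A_def)
      qed
      then show ?thesis using False by (simp only: if_False)
    qed
    finally show "tmul p m P V c = (if (\<forall>l'. c (Inl l') + c (Inr l') = (if l' \<in> insert l S then k l' else 0))
        then (\<Prod>l'\<in>insert l S. of_nat (k l' choose c (Inl l'))) else 0)" .
  qed
qed

lemma pow_decomp:
  fixes t p :: nat
  assumes "t > 0" "p > 1"
  shows "\<exists>s w. t = p ^ s * w \<and> \<not> p dvd w"
  using assms(1)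
proof (induction t rule: less_induct)
  case (less t)
  show ?case
  proof (cases "p dvd t")
    case True
    then obtain t' where t': "t = p * t'" by auto
    then have "t' < t" "t' > 0" using less.prems assms(2) by auto
    then obtain s w where "t' = p ^ s * w" "\<not> p dvd w" using less.IH by blast
    then show ?thesis using t' by (intro exI[of _ "Suc s"] exI[of _ w]) auto
  next
    case False
    then show ?thesis by (intro exI[of _ 0] exI[of _ t]) auto
  qed
qed

lemma binom_nonzero_char:
  fixes t :: nat
  assumes pr: "prime CHAR('k::field)" and t: "t > 0" and np: "\<not> (\<exists>s. t = CHAR('k) ^ s)"
  shows "\<exists>u. 0 < u \<and> u < t \<and> (of_nat (t choose u) :: 'k) \<noteq> 0"
proof -
  define p where "p = CHAR('k)"
  have p1: "p > 1" using pr prime_gt_1_nat p_def by blast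
  obtain s w where tw: "t = p ^ s * w" and nd: "\<not> p dvd w" using pow_decomp[OF t p1] by blast
  define q where "q = p ^ s"
  have w0: "w \<noteq> 0" using tw t by auto
  have w1: "w \<noteq> 1" using np tw p_def by auto
  have q0: "q > 0" using p1 by (simp add: q_def)
  have qt: "q < t" using w0 w1 q0 tw q_def by (metis less_one mult.right_neutral mult_less_cancel1 nat_neq_iff)
  have prp: "prime CHAR('k poly)" using pr by simp
  have X: "([:1, 1:] :: 'k poly) = 1 + monom 1 1" by (simp add: poly_eq_iff coeff_monom coeff_pCons split: nat.split)
  have fd: "([:1, 1:] :: 'k poly) ^ q = 1 + monom 1 q"
    unfolding X by (subst freshmans_dream'[OF prp, of q s]) (auto simp: q_def p_def monom_power)
  have "([:1, 1:] :: 'k poly) ^ t = (1 + monom 1 q) ^ w"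
    by (simp add: tw q_def[symmetric] power_mult fd)
  also have "\<dots> = (\<Sum>k\<le>w. of_nat (w choose k) * monom 1 q ^ k * 1 ^ (w - k))"
    by (subst add.commute) (rule binomial_ring)
  finally have "coeff (([:1, 1:] :: 'k poly) ^ t) q = (\<Sum>k\<le>w. coeff (of_nat (w choose k) * monom 1 (q * k)) q)"
    by (simp add: coeff_sum monom_power)
  also have "\<dots> = (\<Sum>k\<le>w. if k = 1 then of_nat w else 0)"
  proof (rule sum.cong)
    fix k assume "k \<in> {..w}"
    have "q * k = q \<longleftrightarrow> k = 1" using q0 by auto
    then show "coeff (of_nat (w choose k) * monom 1 (q * k)) q = (if k = 1 then of_nat w else 0)"
      by (auto simp: of_nat_poly coeff_monom)
  qed simp
  also have "\<dots> = of_nat w" using w0 by simp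
  finally have "(of_nat (t choose q) :: 'k) = of_nat w"
    using coeff_linear_poly_power[of q t "1::'k" 1] qt by simp
  moreover have "(of_nat w :: 'k) \<noteq> 0" using nd by (simp add: of_nat_eq_0_iff_char_dvd p_def)
  ultimately show ?thesis using q0 qt by auto
qed


lemma split_exists:
  fixes n :: "'e::finite \<Rightarrow> nat"
  assumes pr: "prime CHAR('k::field)" and n0: "n \<noteq> (\<lambda>_. 0)"
    and np: "\<not> (\<exists>l s. n = (\<lambda>j. CHAR('k) ^ s * unitv l j))"
  shows "\<exists>a b. a + b = n \<and> a \<noteq> (\<lambda>_. 0) \<and> b \<noteq> (\<lambda>_. 0) \<and>
     (of_nat (\<Prod>l\<in>UNIV. n l choose a l) :: 'k) \<noteq> 0"
proof -
  obtain l where nl: "n l > 0" using n0 by (auto simp: fun_eq_iff)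
  show ?thesis
  proof (cases "\<exists>l'. l' \<noteq> l \<and> n l' > 0")
    case True
    then obtain l' where l': "l' \<noteq> l" "n l' > 0" by blast
    define a where "a = (\<lambda>j. if j = l then n l else 0)"
    have "a + (n - a) = n" by (auto simp: a_def fun_eq_iff)
    moreover have "a \<noteq> (\<lambda>_. 0)" using nl by (auto simp: a_def fun_eq_iff)
    moreover have "n - a \<noteq> (\<lambda>_. 0)" using l' by (auto simp: a_def fun_eq_iff dest: spec[of _ l'])
    moreover have "(\<Prod>l\<in>UNIV. n l choose a l) = 1" by (rule prod.neutral) (auto simp: a_def)
    ultimately show ?thesis by (intro exI[of _ a] exI[of _ "n - a"]) auto
  next
    case False
    then have z: "\<And>l'. l' \<noteq> l \<Longrightarrow> n l' = 0" by auto
    have "\<not> (\<exists>s. n l = CHAR('k) ^ s)"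
    proof
      assume "\<exists>s. n l = CHAR('k) ^ s"
      then obtain s where "n l = CHAR('k) ^ s" by blast
      then have "n = (\<lambda>j. CHAR('k) ^ s * unitv l j)" using z by (auto simp: fun_eq_iff unitv_def)
      then show False using np by blast
    qed
    then obtain u where u: "0 < u" "u < n l" "(of_nat (n l choose u) :: 'k) \<noteq> 0"
      using binom_nonzero_char[OF pr nl] by blast
    define a where "a = (\<lambda>j. if j = l then u else 0)"
    have "a + (n - a) = n" using u by (auto simp: a_def fun_eq_iff)
    moreover have "a \<noteq> (\<lambda>_. 0)" using u by (auto simp: a_def fun_eq_iff)
    moreover have "n - a \<noteq> (\<lambda>_. 0)" using u by (auto simp: a_def fun_eq_iff dest: spec[of _ l])
    moreover have "(\<Prod>l\<in>UNIV. n l choose a l) = n l choose u"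
    proof -
      have "(\<Prod>j\<in>UNIV. n j choose a j) = (\<Prod>j\<in>UNIV. if j = l then n l choose u else 1)"
        by (rule prod.cong) (auto simp: a_def z)
      then show ?thesis by simp
    qed
    ultimately show ?thesis using u by (intro exI[of _ a] exI[of _ "n - a"]) auto
  qed
qed

theorem fact2p14:
  fixes p :: nat and m :: enat
    and phi :: "'k::field \<Rightarrow> 'r::comm_ring_1"
    and F :: "'e::finite \<Rightarrow> (('e + 'e) \<Rightarrow> nat) \<Rightarrow> 'k"
    and D D' :: "('e \<Rightarrow> nat) \<Rightarrow> 'r \<Rightarrow> 'r"
  assumes char: "CHAR('k) = p" and ppos: "p > 0"
    and mpos: "m > 0"
    and phi_hom: "\<And>x y. phi (x + y) = phi x + phi y"
      "\<And>x y. phi (x * y) = phi x * phi y" "phi 1 = 1"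
    and F_in: "\<And>l. in_trunc p m (F l)"
    and F_v0: "\<And>l a. F l (case_sum a (\<lambda>_. 0)) = (if a = unitv l then 1 else 0)"
    and F_0w: "\<And>l b. F l (case_sum (\<lambda>_. 0) b) = (if b = unitv l then 1 else 0)"
    and DF: "F_deriv p m phi F D"
    and D'F: "F_deriv p m phi F D'"
    and agree: "\<And>l (i::nat). enat i < m \<Longrightarrow> D (\<lambda>j. p ^ i * unitv l j) = D' (\<lambda>j. p ^ i * unitv l j)"
  shows "\<forall>i \<in> idx p m. D i = D' i"
proof -
  have pr: "prime CHAR('k)" using char ppos prime_CHAR_semidom by blast
  have p1: "p > 1" using pr char prime_gt_1_nat by blast
  have phi0: "phi 0 = 0" using phi_hom(1)[of 0 0] by simp
  have degc: "deg c = deg (c \<circ> Inl) + deg (c \<circ> Inr)" for c :: "'e + 'e \<Rightarrow> nat"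
    unfolding deg_split by (simp add: deg_def sum.distrib)
  have cs0: "case_sum (\<lambda>_. 0) (\<lambda>_. 0) = (\<lambda>_::'e+'e. 0::nat)" by (auto simp: fun_eq_iff split: sum.split)
  have uz: "unitv l \<noteq> (\<lambda>_. 0)" for l :: 'e by (auto simp: unitv_def fun_eq_iff dest: spec[of _ l])
  have o1: "ordge 1 (F l)" for l
    unfolding ordge_def
  proof (intro allI impI)
    fix c :: "'e + 'e \<Rightarrow> nat" assume "deg c < 1"
    then have "c = (\<lambda>_. 0)" using deg_0_iff by auto
    then show "F l c = 0" using F_v0[of l "\<lambda>_. 0"] cs0 uz[of l] by simp
  qed
  have unit_iff: "a = unitv l \<longleftrightarrow> a l = 1" if "deg a = 1" for a :: "'e \<Rightarrow> nat" and l
    using deg_one_point[OF that, of l] by (auto simp: unitv_def)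
  have f1: "F l c = (if c (Inl l) + c (Inr l) = 1 then 1 else 0)" if dc: "deg c = 1" for l c
  proof -
    have "deg (c \<circ> Inl) = 0 \<or> deg (c \<circ> Inr) = 0" using dc degc[of c] by auto
    then show ?thesis
    proof
      assume "deg (c \<circ> Inl) = 0"
      then have z: "c \<circ> Inl = (\<lambda>_. 0)" by (simp add: deg_0_iff)
      then have cc: "c = case_sum (\<lambda>_. 0) (c \<circ> Inr)" by (auto simp: fun_eq_iff split: sum.split)
      have d1: "deg (c \<circ> Inr) = 1" using dc degc[of c] z by (simp add: deg_def)
      have "c (Inl l) = 0" using z by (auto simp: fun_eq_iff)
      then show ?thesis using F_0w[of l "c \<circ> Inr"] unit_iff[OF d1, of l] cc by simp
    next
      assume "deg (c \<circ> Inr) = 0"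
      then have z: "c \<circ> Inr = (\<lambda>_. 0)" by (simp add: deg_0_iff)
      then have cc: "c = case_sum (c \<circ> Inl) (\<lambda>_. 0)" by (auto simp: fun_eq_iff split: sum.split)
      have d1: "deg (c \<circ> Inl) = 1" using dc degc[of c] z by (simp add: deg_def)
      have "c (Inr l) = 0" using z by (auto simp: fun_eq_iff)
      then show ?thesis using F_v0[of l "c \<circ> Inl"] unit_iff[OF d1, of l] cc by simp
    qed
  qed
  have FP: "ordge (sum k UNIV) (Fpow p m F k) \<and>
    (\<forall>c \<in> idx p m. deg c = sum k UNIV \<longrightarrow> Fpow p m F k c =
       (if (\<forall>l. c (Inl l) + c (Inr l) = k l) then (\<Prod>l\<in>UNIV. of_nat (k l choose c (Inl l))) else 0))" for k
    using Fp_lead[OF o1 f1, of UNIV k p m] unfolding Fpow_def by simp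
  have FP1: "deg c < deg k \<Longrightarrow> Fpow p m F k c = 0" for c k
    using FP[of k] by (auto simp: ordge_def deg_def)
  have FP2: "c \<in> idx p m \<Longrightarrow> deg c = deg k \<Longrightarrow> Fpow p m F k c =
       (if (\<forall>l. c (Inl l) + c (Inr l) = k l) then (\<Prod>l\<in>UNIV. of_nat (k l choose c (Inl l))) else 0)" for c k
    using FP[of k] by (auto simp: deg_def)
  have HD: "D (\<lambda>_. 0) = id" "D' (\<lambda>_. 0) = id" using DF D'F by (auto simp: F_deriv_def HS_deriv_def)
  have FD: "\<And>r c. c \<in> idx p m \<Longrightarrow> D (c \<circ> Inr) (D (c \<circ> Inl) r) =
        Sum_any (\<lambda>i. if i \<in> idx p m then D i r * phi (Fpow p m F i c) else 0)"
    using DF by (auto simp: F_deriv_def)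
  have FD': "\<And>r c. c \<in> idx p m \<Longrightarrow> D' (c \<circ> Inr) (D' (c \<circ> Inl) r) =
        Sum_any (\<lambda>i. if i \<in> idx p m then D' i r * phi (Fpow p m F i c) else 0)"
    using D'F by (auto simp: F_deriv_def)
  have main: "n \<in> idx p m \<Longrightarrow> D n = D' n" for n
  proof (induction "deg n" arbitrary: n rule: less_induct)
    case less
    note nI = less.prems
    show ?case
    proof (cases "n = (\<lambda>_. 0)")
      case True then show ?thesis using HD by simp
    next
      case n0: False
      show ?thesis
      proof (cases "\<exists>l s. n = (\<lambda>j. p ^ s * unitv l j)")
        case True
        then obtain l s where ns: "n = (\<lambda>j. p ^ s * unitv l j)" by blast
        have "enat s < m"
        proof (cases m)
          case (enat mm)
          then have "n l < p ^ mm" using nI by (auto simp: idx_def)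
          then have "p ^ s < p ^ mm" using ns by (simp add: unitv_def)
          then have "s < mm" using p1 power_less_imp_less_exp by blast
          then show ?thesis using enat by simp
        qed simp
        then show ?thesis using agree ns by simp
      next
        case False
        then obtain a b where ab: "a + b = n" "a \<noteq> (\<lambda>_. 0)" "b \<noteq> (\<lambda>_. 0)"
          and bn: "(of_nat (\<Prod>l\<in>UNIV. n l choose a l) :: 'k) \<noteq> 0"
          using split_exists[OF pr n0] char by auto
        define c :: "'e + 'e \<Rightarrow> nat" where "c = case_sum a b"
        have cl: "c \<circ> Inl = a" "c \<circ> Inr = b" by (auto simp: c_def fun_eq_iff)
        have abx: "a x + b x = n x" for x using ab(1) by (auto simp: fun_eq_iff)
        have an: "a \<le> n" "b \<le> n" unfolding le_fun_def using abx by (metis le_add1, metis le_add2)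
        have aI: "a \<in> idx p m" "b \<in> idx p m" using idx_down[OF nI] an by auto
        have cI: "c \<in> idx p m" using aI unfolding idx_def c_def by (auto split: sum.split)
        have degab: "deg n = deg a + deg b" using ab(1) by (auto simp: deg_def sum.distrib)
        have dc: "deg c = deg n" using degc[of c] cl degab by simp
        have da: "deg a < deg n" "deg b < deg n"
          using degab ab(2,3) deg_0_iff[of a] deg_0_iff[of b] by auto
        have Da: "D a = D' a" "D b = D' b" using less.hyps da aI by auto
        have sig: "c (Inl l) + c (Inr l) = n l" for l using ab(1) by (auto simp: c_def fun_eq_iff)
        define \<beta> where "\<beta> = Fpow p m F n c"
        have \<beta>: "\<beta> = of_nat (\<Prod>l\<in>UNIV. n l choose a l)"
          using FP2[OF cI dc] sig by (simp add: \<beta>_def c_def)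
        show ?thesis
        proof
          fix r
          define g where "g = (\<lambda>i. if i \<in> idx p m then D i r * phi (Fpow p m F i c) else 0)"
          define g' where "g' = (\<lambda>i. if i \<in> idx p m then D' i r * phi (Fpow p m F i c) else 0)"
          define K where "K = {i::'e \<Rightarrow> nat. i \<le> (\<lambda>_. deg n)}"
          have finK: "finite K" unfolding K_def by (rule finite_le)
          have nK: "n \<in> K" unfolding K_def le_fun_def deg_def by (auto intro: member_le_sum)
          have supp: "i \<in> K" if "Fpow p m F i c \<noteq> 0" for i
          proof -
            have "\<not> deg c < deg i" using FP1 that by blast
            then have "deg i \<le> deg n" using dc by simp
            then show ?thesis unfolding K_def le_fun_def deg_def
              by (auto intro: order_trans[OF member_le_sum])
          qed
          have gK: "{i. g i \<noteq> 0} \<subseteq> K" "{i. g' i \<noteq> 0} \<subseteq> K"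
            using supp phi0 by (auto simp: g_def g'_def split: if_splits) (metis mult_zero_right)+
          have geq: "g i = g' i" if "i \<noteq> n" for i
          proof (cases "i \<in> idx p m")
            case iI: True
            consider "deg i < deg n" | "deg i = deg n" | "deg n < deg i" by linarith
            then show ?thesis
            proof cases
              case 1 then show ?thesis using less.hyps iI by (simp add: g_def g'_def)
            next
              case 2
              have "Fpow p m F i c = 0" using FP2[OF cI, of i] 2 dc that sig
                by (auto simp: fun_eq_iff)
              then show ?thesis by (simp add: g_def g'_def phi0)
            next
              case 3
              then have "Fpow p m F i c = 0" using FP1 dc by simp
              then show ?thesis by (simp add: g_def g'_def phi0)
            qed
          qed (simp add: g_def g'_def)
          have "D b (D a r) = Sum_any g" using FD[OF cI] cl by (simp add: g_def)
          also have "\<dots> = sum g K" by (rule Sum_any.expand_superset[OF finK gK(1)])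
          also have "\<dots> = g n + sum g (K - {n})" using finK nK by (simp add: sum.remove)
          finally have e1: "D b (D a r) = g n + sum g (K - {n})" .
          have "D' b (D' a r) = Sum_any g'" using FD'[OF cI] cl by (simp add: g'_def)
          also have "\<dots> = sum g' K" by (rule Sum_any.expand_superset[OF finK gK(2)])
          also have "\<dots> = g' n + sum g' (K - {n})" using finK nK by (simp add: sum.remove)
          finally have e2: "D' b (D' a r) = g' n + sum g' (K - {n})" .
          have "sum g (K - {n}) = sum g' (K - {n})" using geq by (intro sum.cong) auto
          then have "g n = g' n" using e1 e2 Da by simp
          then have eq: "D n r * phi \<beta> = D' n r * phi \<beta>" using nI by (simp add: g_def g'_def \<beta>_def)
          have b0: "\<beta> \<noteq> 0" using \<beta> bn by simp
          have inv: "phi \<beta> * phi (inverse \<beta>) = 1" using phi_hom(2)[of \<beta> "inverse \<beta>"] phi_hom(3) b0 by simp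
          have "D n r = D n r * phi \<beta> * phi (inverse \<beta>)" using inv by (simp add: mult.assoc)
          also have "\<dots> = D' n r * phi \<beta> * phi (inverse \<beta>)" using eq by simp
          also have "\<dots> = D' n r" using inv by (simp add: mult.assoc)
          finally show "D n r = D' n r" .
        qed
      qed
    qed
  qed
  show ?thesis using main by blast
qed

end
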